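(* Let $q\ge1$ be an integer such that $b^q\ge 2$ and suppose that $E(q,x)\ne\mathcal{A}^q\times\mathcal{A}^q$ for every $x\in[0,1)$. Then $\sigma(q)\le b^q-2+2/\alpha$, where $\alpha=\alpha(b,q)>1$ satisfies $2-\alpha=(b^q-2)\alpha(\alpha-1)$.
   Context: Standing setup: $b\ge2$ integer, $\mathcal{A}=\{0,\dots,b-1\}$, $\gamma\in(1/b,1)$, $\psi$ a $\mathbb{Z}$-periodic $C^1$ function. $S(x,\mathbf{i})=\sum_{n\ge1}\gamma^{n-1}\psi\big(\frac{x+i_1+i_2b+\cdots+i_nb^{n-1}}{b^n}\big)$, $S'=\partial_xS$. For $\mathbf{u}\in\mathcal{A}^q$, $x(\mathbf{u})=(x+u_1+u_2b+\cdots+u_qb^{q-1})/b^q$. Sequences $\mathbf{i},\mathbf{j}$ are $(\varepsilon,\delta)$-tangent at $x_0$ if $|S(x_0,\mathbf{i})-S(x_0,\mathbf{j})|\le\varepsilon$ and $|S'(x_0,\mathbf{i})-S'(x_0,\mathbf{j})|\le\delta$. $E(q,x_0;\varepsilon,\delta)$: pairs $(\mathbf{k},\mathbf{l})\in\mathcal{A}^q\times\mathcal{A}^q$ such that some concatenations $\mathbf{ku},\mathbf{lv}$ ($\mathbf{u},\mathbf{v}\in\mathcal{A}^{\mathbb{Z}^+}$) are $(\varepsilon,\delta)$-tangent at $x_0$; $E(q,x_0)=\bigcap_{\varepsilon,\delta>0}E(q,x_0;\varepsilon,\delta)$. Weight function: measurable $\omega:[0,1)\to(0,\infty)$ with $\omega,1/\omega$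 bounded. Admissible testing function of order $q$: measurable $V:[0,1)\times\mathcal{A}^q\times\mathcal{A}^q\to[0,\infty)$ such that for some $\varepsilon,\delta>0$, $V(x,\mathbf{u},\mathbf{v})V(x,\mathbf{v},\mathbf{u})\ge1$ whenever $x\in[0,1)$ and $(\mathbf{u},\mathbf{v})\in E(q,x;\varepsilon,\delta)$. $\Sigma_{V,\omega}(x)=\sup_{\mathbf{u}}\frac{\omega(x)}{\omega(x(\mathbf{u}))}\sum_{\mathbf{v}}V(x,\mathbf{u},\mathbf{v})$; $\sigma(q)=\inf_{\omega,V}\|\Sigma_{V,\omega}\|_\infty$. *)

theory Defs
  imports "HOL-Analysis.Analysis" "HOL-Probability.Essential_Supremum"
begin

(* Digit sequences in A^{Z+}: i :: nat => nat, with i 0 playing the role of i_1. *)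
definition seqs :: "nat \<Rightarrow> (nat \<Rightarrow> nat) set" where
  "seqs b = {i. \<forall>n. i n < b}"

(* Words in A^q: lists of length q, u ! 0 = u_1. *)
definition words :: "nat \<Rightarrow> nat \<Rightarrow> nat list set" where
  "words b q = {u. length u = q \<and> (\<forall>a\<in>set u. a < b)}"

definition cat :: "nat list \<Rightarrow> (nat \<Rightarrow> nat) \<Rightarrow> (nat \<Rightarrow> nat)" where
  "cat k u = (\<lambda>n. if n < length k then k ! n else u (n - length k))"

(* S(x,i) = sum_{n>=1} gamma^(n-1) psi((x + i_1 + ... + i_n b^(n-1)) / b^n), reindexed n = m+1 *)
definition S :: "nat \<Rightarrow> real \<Rightarrow> (real \<Rightarrow> real) \<Rightarrow> real \<Rightarrow> (nat \<Rightarrow> nat) \<Rightarrow> real" where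
  "S b \<gamma> \<psi> x i = (\<Sum>m. \<gamma> ^ m * \<psi> ((x + (\<Sum>k\<le>m. real (i k) * real b ^ k)) / real b ^ (m + 1)))"

definition S' :: "nat \<Rightarrow> real \<Rightarrow> (real \<Rightarrow> real) \<Rightarrow> real \<Rightarrow> (nat \<Rightarrow> nat) \<Rightarrow> real" where
  "S' b \<gamma> \<psi> x i = deriv (\<lambda>y. S b \<gamma> \<psi> y i) x"

definition xw :: "nat \<Rightarrow> real \<Rightarrow> nat list \<Rightarrow> real" where
  "xw b x u = (x + (\<Sum>j<length u. real (u ! j) * real b ^ j)) / real b ^ length u"

definition tangent :: "nat \<Rightarrow> real \<Rightarrow> (real \<Rightarrow> real) \<Rightarrow> real \<Rightarrow> real \<Rightarrow> real
    \<Rightarrow> (nat \<Rightarrow> nat) \<Rightarrow> (nat \<Rightarrow> nat) \<Rightarrow> bool" where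
  "tangent b \<gamma> \<psi> \<epsilon> \<delta> x0 i j \<longleftrightarrow>
     \<bar>S b \<gamma> \<psi> x0 i - S b \<gamma> \<psi> x0 j\<bar> \<le> \<epsilon> \<and> \<bar>S' b \<gamma> \<psi> x0 i - S' b \<gamma> \<psi> x0 j\<bar> \<le> \<delta>"

definition Eed :: "nat \<Rightarrow> real \<Rightarrow> (real \<Rightarrow> real) \<Rightarrow> nat \<Rightarrow> real \<Rightarrow> real \<Rightarrow> real
    \<Rightarrow> (nat list \<times> nat list) set" where
  "Eed b \<gamma> \<psi> q x0 \<epsilon> \<delta> = {(k, l). k \<in> words b q \<and> l \<in> words b q \<and>
      (\<exists>u\<in>seqs b. \<exists>v\<in>seqs b. tangent b \<gamma> \<psi> \<epsilon> \<delta> x0 (cat k u) (cat l v))}"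

definition E :: "nat \<Rightarrow> real \<Rightarrow> (real \<Rightarrow> real) \<Rightarrow> nat \<Rightarrow> real \<Rightarrow> (nat list \<times> nat list) set" where
  "E b \<gamma> \<psi> q x0 = (\<Inter>\<epsilon>\<in>{0<..}. \<Inter>\<delta>\<in>{0<..}. Eed b \<gamma> \<psi> q x0 \<epsilon> \<delta>)"

abbreviation unitI :: "real measure" where
  "unitI \<equiv> restrict_space lborel {0..<1}"

definition weight :: "(real \<Rightarrow> real) \<Rightarrow> bool" where
  "weight \<omega> \<longleftrightarrow> \<omega> \<in> borel_measurable unitI \<and> (\<forall>x\<in>{0..<1}. \<omega> x > 0) \<and>
     (\<exists>M. \<forall>x\<in>{0..<1}. \<omega> x \<le> M \<and> 1 / \<omega> x \<le> M)"

definition admissible :: "nat \<Rightarrow> real \<Rightarrow> (real \<Rightarrow> real) \<Rightarrow> nat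
    \<Rightarrow> (real \<Rightarrow> nat list \<Rightarrow> nat list \<Rightarrow> real) \<Rightarrow> bool" where
  "admissible b \<gamma> \<psi> q V \<longleftrightarrow>
     (\<forall>u\<in>words b q. \<forall>v\<in>words b q. (\<lambda>x. V x u v) \<in> borel_measurable unitI) \<and>
     (\<forall>x\<in>{0..<1}. \<forall>u\<in>words b q. \<forall>v\<in>words b q. V x u v \<ge> 0) \<and>
     (\<exists>\<epsilon>>0. \<exists>\<delta>>0. \<forall>x\<in>{0..<1}. \<forall>(u, v)\<in>Eed b \<gamma> \<psi> q x \<epsilon> \<delta>. V x u v * V x v u \<ge> 1)"

definition SigmaVw :: "nat \<Rightarrow> nat \<Rightarrow> (real \<Rightarrow> nat list \<Rightarrow> nat list \<Rightarrow> real)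
    \<Rightarrow> (real \<Rightarrow> real) \<Rightarrow> real \<Rightarrow> ereal" where
  "SigmaVw b q V \<omega> x = (SUP u\<in>words b q. ereal (\<omega> x / \<omega> (xw b x u) * (\<Sum>v\<in>words b q. V x u v)))"

definition sigma :: "nat \<Rightarrow> real \<Rightarrow> (real \<Rightarrow> real) \<Rightarrow> nat \<Rightarrow> ereal" where
  "sigma b \<gamma> \<psi> q = (INF (\<omega>, V)\<in>{(\<omega>, V). weight \<omega> \<and> admissible b \<gamma> \<psi> q V}.
      esssup unitI (SigmaVw b q V \<omega>))"

end

theory Submission
  imports Defs
begin

lemma per_nat: assumes per: "\<forall>x. f (x + 1) = (f x::real)" shows "f (x + real n) = f x"
proof (induction n)
  case (Suc n)
  have "f (x + real (Suc n)) = f ((x + real n) + 1)" by (simp add: algebra_simps)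
  also have "\<dots> = f (x + real n)" using per by blast
  finally show ?case using Suc by argo
qed auto

lemma per_int: assumes per: "\<forall>x. f (x + 1) = (f x::real)" shows "f (x + real_of_int n) = f x"
proof (cases "n \<ge> 0")
  case True
  then have "real_of_int n = real (nat n)" by simp
  then show ?thesis using per_nat[OF per, of x "nat n"] by metis
next
  case False
  then have m: "real_of_int n = - real (nat (-n))" by simp
  have "f (x + real_of_int n + real (nat (-n))) = f (x + real_of_int n)" by (rule per_nat[OF per])
  moreover have "x + real_of_int n + real (nat (-n)) = x" using m by linarith
  ultimately show ?thesis by metis
qed

lemma per_bounded:
  fixes f :: "real \<Rightarrow> real" assumes per: "\<forall>x. f (x + 1) = f x" and c: "continuous_on UNIV f"
  shows "\<exists>B. \<forall>x. \<bar>f x\<bar> \<le> B"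
proof -
  have "compact (f ` {0..1})"
    by (rule compact_continuous_image) (auto intro: continuous_on_subset[OF c])
  then obtain B where B: "\<forall>y\<in>f ` {0..1}. norm y \<le> B" using compact_imp_bounded bounded_iff by metis
  show ?thesis
  proof (intro exI allI)
    fix x
    have "f x = f ((x - of_int \<lfloor>x\<rfloor>) + of_int \<lfloor>x\<rfloor>)" by simp
    also have "\<dots> = f (x - of_int \<lfloor>x\<rfloor>)" by (rule per_int[OF per])
    finally have "f x = f (x - of_int \<lfloor>x\<rfloor>)" .
    moreover have "x - of_int \<lfloor>x\<rfloor> \<in> {0..1}"
      by (simp add: less_imp_le) linarith
    ultimately show "\<bar>f x\<bar> \<le> B" using B by auto
  qed
qed

lemma per_unif:
  fixes f :: "real \<Rightarrow> real" assumes per: "\<forall>x. f (x + 1) = f x" and c: "continuous_on UNIV f"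
  shows "\<forall>\<eta>>0. \<exists>d>0. \<forall>a a'. \<bar>a - a'\<bar> < d \<longrightarrow> \<bar>f a - f a'\<bar> < \<eta>"
proof (intro allI impI)
  fix \<eta> :: real assume e: "\<eta> > 0"
  have "uniformly_continuous_on {0..3} f"
    by (rule compact_uniformly_continuous) (auto intro: continuous_on_subset[OF c])
  then obtain d where d: "d > 0" "\<And>a a'. a \<in> {0..3} \<Longrightarrow> a' \<in> {0..3} \<Longrightarrow> dist a' a < d \<Longrightarrow> dist (f a') (f a) < \<eta>"
    unfolding uniformly_continuous_on_def using e by metis
  show "\<exists>d>0. \<forall>a a'. \<bar>a - a'\<bar> < d \<longrightarrow> \<bar>f a - f a'\<bar> < \<eta>"
  proof (intro exI conjI allI impI)
    show "min d 1 > 0" using d by simp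
    fix a a' :: real assume h: "\<bar>a - a'\<bar> < min d 1"
    define n where "n = 1 - \<lfloor>a\<rfloor>"
    have fa: "f (a + of_int n) = f a" "f (a' + of_int n) = f a'" using per_int[OF per] by auto
    have "a + of_int n \<in> {0..3}" "a' + of_int n \<in> {0..3}" using h unfolding n_def
      by (auto simp: less_imp_le) linarith+
    then have "dist (f (a + of_int n)) (f (a' + of_int n)) < \<eta>"
      using d(2)[of "a' + of_int n" "a + of_int n"] h by (auto simp: dist_real_def)
    then show "\<bar>f a - f a'\<bar> < \<eta>" using fa by (simp add: dist_real_def)
  qed
qed

definition NN :: "nat \<Rightarrow> (nat \<Rightarrow> nat) \<Rightarrow> nat \<Rightarrow> nat" where
  "NN b i m = (\<Sum>k\<le>m. i k * b ^ k)"

lemma real_NN: "(\<Sum>k\<le>m. real (i k) * real b ^ k) = real (NN b i m)"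
  by (simp add: NN_def)

lemma S_NN: "S b \<gamma> \<psi> x i = (\<Sum>m. \<gamma> ^ m * \<psi> ((x + real (NN b i m)) / real b ^ (m + 1)))"
  unfolding S_def real_NN ..

definition Sd :: "nat \<Rightarrow> real \<Rightarrow> (real \<Rightarrow> real) \<Rightarrow> real \<Rightarrow> (nat \<Rightarrow> nat) \<Rightarrow> real" where
  "Sd b \<gamma> \<psi>' x i = (\<Sum>m. \<gamma> ^ m * (\<psi>' ((x + real (NN b i m)) / real b ^ (m + 1)) * (1 / real b ^ (m + 1))))"

lemma geo_summable_bound:
  fixes f :: "nat \<Rightarrow> real"
  assumes "\<And>m. \<bar>f m\<bar> \<le> C * \<gamma> ^ m" "0 \<le> \<gamma>" "\<gamma> < 1"
  shows "summable f"
proof -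
  have "summable (\<lambda>m. C * \<gamma> ^ m)" using assms by (intro summable_mult summable_geometric) simp
  then show ?thesis by (rule summable_comparison_test') (use assms(1) in auto)
qed

lemma geo_suminf_bound:
  fixes f :: "nat \<Rightarrow> real"
  assumes "\<And>m. \<bar>f m\<bar> \<le> C * \<gamma> ^ m" "0 \<le> \<gamma>" "\<gamma> < 1"
  shows "\<bar>suminf f\<bar> \<le> C / (1 - \<gamma>)"
proof -
  have sg: "(\<lambda>m. C * \<gamma> ^ m) sums (C * (1 / (1 - \<gamma>)))" using assms by (intro sums_mult geometric_sums) simp
  have sf: "summable f" by (rule geo_summable_bound[OF assms])
  have sng: "(\<lambda>m. - (C * \<gamma> ^ m)) sums (- (C * (1 / (1 - \<gamma>))))" using sg by (rule sums_minus)
  have le1: "f m \<le> C * \<gamma> ^ m" "- (C * \<gamma> ^ m) \<le> f m" for m using assms(1)[of m] by (auto simp: abs_le_iff)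
  have "suminf f \<le> (\<Sum>m. C * \<gamma> ^ m)"
    by (rule suminf_le) (use le1 sf sg in \<open>auto simp: sums_iff\<close>)
  also have "\<dots> = C * (1 / (1 - \<gamma>))" using sg by (rule sums_unique[symmetric])
  finally have "suminf f \<le> C * (1 / (1 - \<gamma>))" .
  moreover have "(\<Sum>m. - (C * \<gamma> ^ m)) \<le> suminf f"
    by (rule suminf_le) (use le1 sf sng in \<open>auto simp: sums_iff\<close>)
  moreover have "(\<Sum>m. - (C * \<gamma> ^ m)) = - (C * (1 / (1 - \<gamma>)))" using sng by (rule sums_unique[symmetric])
  ultimately show ?thesis by (simp add: abs_le_iff)
qed

lemma S_summable:
  fixes \<psi> :: "real \<Rightarrow> real"
  assumes "\<forall>x. \<bar>\<psi> x\<bar> \<le> B" "0 \<le> \<gamma>" "\<gamma> < 1"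
  shows "summable (\<lambda>m. \<gamma> ^ m * \<psi> (a m))"
proof (rule geo_summable_bound[of _ B \<gamma>])
  fix m
  have "\<gamma> ^ m * \<bar>\<psi> (a m)\<bar> \<le> \<gamma> ^ m * B" using assms by (intro mult_left_mono) auto
  then show "\<bar>\<gamma> ^ m * \<psi> (a m)\<bar> \<le> B * \<gamma> ^ m" using assms by (simp add: abs_mult mult.commute)
qed (use assms in auto)

lemma S_deriv:
  fixes \<psi> \<psi>' :: "real \<Rightarrow> real"
  assumes d: "\<forall>x. (\<psi> has_real_derivative \<psi>' x) (at x)"
    and B: "\<forall>x. \<bar>\<psi> x\<bar> \<le> B" and B': "\<forall>x. \<bar>\<psi>' x\<bar> \<le> B'"
    and g: "0 \<le> \<gamma>" "\<gamma> < 1" and b: "b \<ge> 1"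
  shows "((\<lambda>y. S b \<gamma> \<psi> y i) has_real_derivative Sd b \<gamma> \<psi>' x i) (at x)"
proof -
  define f where "f = (\<lambda>m y. \<gamma> ^ m * \<psi> ((y + real (NN b i m)) / real b ^ (m + 1)))"
  define f' where "f' = (\<lambda>m y. \<gamma> ^ m * (\<psi>' ((y + real (NN b i m)) / real b ^ (m + 1)) * (1 / real b ^ (m + 1))))"
  have bpos: "real b ^ (m + 1) \<ge> 1" for m by (rule one_le_power) (use b in simp)
  have df: "(f m has_field_derivative f' m y) (at y within UNIV)" for m y
    unfolding f_def f'_def
  proof (intro DERIV_cmult DERIV_chain2[where f=\<psi>])
    show "(\<psi> has_real_derivative \<psi>' ((y + real (NN b i m)) / real b ^ (m + 1))) (at ((y + real (NN b i m)) / real b ^ (m + 1)))"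
      using d by blast
    show "((\<lambda>y. (y + real (NN b i m)) / real b ^ (m + 1)) has_real_derivative 1 / real b ^ (m + 1)) (at y)"
      using b by (auto intro!: derivative_eq_intros)
  qed
  have uc: "uniformly_convergent_on UNIV (\<lambda>n x. \<Sum>i<n. f' i x)"
  proof (rule Weierstrass_m_test')
    fix n y
    define X where "X = \<psi>' ((y + real (NN b i n)) / real b ^ (n + 1)) * (1 / real b ^ (n + 1))"
    have "\<bar>X\<bar> \<le> B' * 1" unfolding X_def abs_mult
      using B' bpos[of n] by (intro mult_mono) (auto simp: divide_simps)
    then have "\<gamma> ^ n * \<bar>X\<bar> \<le> \<gamma> ^ n * B'" using g by (intro mult_left_mono) auto
    moreover have "norm (f' n y) = \<gamma> ^ n * \<bar>X\<bar>" unfolding f'_def X_def using g by (simp add: abs_mult)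
    ultimately show "norm (f' n y) \<le> B' * \<gamma> ^ n" by (simp add: mult.commute)
    show "summable (\<lambda>n. B' * \<gamma> ^ n)" using g by (intro summable_mult summable_geometric) simp
  qed
  have sm: "summable (\<lambda>n. f n 0)" unfolding f_def by (rule S_summable[OF B g])
  have "((\<lambda>x. \<Sum>n. f n x) has_field_derivative (\<Sum>n. f' n x)) (at x)"
    by (rule has_field_derivative_series'(2)[OF convex_UNIV df uc _ sm]) auto
  moreover have "(\<lambda>x. \<Sum>n. f n x) = (\<lambda>y. S b \<gamma> \<psi> y i)" unfolding f_def S_NN ..
  moreover have "(\<Sum>n. f' n x) = Sd b \<gamma> \<psi>' x i" unfolding f'_def Sd_def ..
  ultimately show ?thesis by simp
qed

lemma S'_Sd:
  fixes \<psi> \<psi>' :: "real \<Rightarrow> real"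
  assumes d: "\<forall>x. (\<psi> has_real_derivative \<psi>' x) (at x)"
    and B: "\<forall>x. \<bar>\<psi> x\<bar> \<le> B" and B': "\<forall>x. \<bar>\<psi>' x\<bar> \<le> B'"
    and g: "0 \<le> \<gamma>" "\<gamma> < 1" and b: "b \<ge> 1"
  shows "S' b \<gamma> \<psi> x i = Sd b \<gamma> \<psi>' x i"
  unfolding S'_def by (rule DERIV_imp_deriv[OF S_deriv[OF assms]])

lemma arg_close:
  assumes "b \<ge> (1::nat)" "\<bar>x - y\<bar> < d"
  shows "\<bar>(x + c) / real b ^ (m + 1) - (y + c) / real b ^ (m + 1)\<bar> < d"
proof -
  have bp: "real b ^ (m + 1) \<ge> 1" by (rule one_le_power) (use assms in simp)
  have "\<bar>(x + c) / real b ^ (m + 1) - (y + c) / real b ^ (m + 1)\<bar> = \<bar>x - y\<bar> / real b ^ (m + 1)"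
    by (simp add: diff_divide_distrib[symmetric])
  also have "\<dots> \<le> \<bar>x - y\<bar> / 1" by (rule divide_left_mono) (use bp in auto)
  also have "\<dots> = \<bar>x - y\<bar>" by simp
  finally show ?thesis using assms by linarith
qed

lemma Sd_summable:
  fixes \<psi>' :: "real \<Rightarrow> real"
  assumes B': "\<forall>x. \<bar>\<psi>' x\<bar> \<le> B'" and g: "0 \<le> \<gamma>" "\<gamma> < 1" and b: "b \<ge> 1"
  shows "summable (\<lambda>m. \<gamma> ^ m * (\<psi>' (a m) * (1 / real b ^ (m + 1))))"
proof (rule geo_summable_bound[of _ B' \<gamma>])
  fix m
  have bp: "real b ^ (m + 1) \<ge> 1" by (rule one_le_power) (use b in simp)
  define X where "X = \<psi>' (a m) * (1 / real b ^ (m + 1))"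
  have "\<bar>X\<bar> \<le> B' * 1" unfolding X_def abs_mult
    using B' bp by (intro mult_mono) (auto simp: divide_simps)
  then have "\<gamma> ^ m * \<bar>X\<bar> \<le> \<gamma> ^ m * B'" using g by (intro mult_left_mono) auto
  then show "\<bar>\<gamma> ^ m * (\<psi>' (a m) * (1 / real b ^ (m + 1)))\<bar> \<le> B' * \<gamma> ^ m"
    using g unfolding X_def by (simp add: abs_mult mult.commute)
qed (use g in auto)

lemma S_ucont:
  fixes \<psi> \<psi>' :: "real \<Rightarrow> real"
  assumes B: "\<forall>x. \<bar>\<psi> x\<bar> \<le> B" and B': "\<forall>x. \<bar>\<psi>' x\<bar> \<le> B'"
    and u: "\<forall>\<eta>>0. \<exists>d>0. \<forall>a a'. \<bar>a - a'\<bar> < d \<longrightarrow> \<bar>\<psi> a - \<psi> a'\<bar> < \<eta>"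
    and u': "\<forall>\<eta>>0. \<exists>d>0. \<forall>a a'. \<bar>a - a'\<bar> < d \<longrightarrow> \<bar>\<psi>' a - \<psi>' a'\<bar> < \<eta>"
    and g: "0 \<le> \<gamma>" "\<gamma> < 1" and b: "b \<ge> 1"
  shows "\<forall>\<eta>>0. \<exists>d>0. \<forall>x y i. \<bar>x - y\<bar> < d \<longrightarrow>
     \<bar>S b \<gamma> \<psi> x i - S b \<gamma> \<psi> y i\<bar> \<le> \<eta> \<and> \<bar>Sd b \<gamma> \<psi>' x i - Sd b \<gamma> \<psi>' y i\<bar> \<le> \<eta>"
proof (intro allI impI)
  fix \<eta> :: real assume e0: "\<eta> > 0"
  define e where "e = \<eta> * (1 - \<gamma>)"
  have e: "e > 0" using e0 g by (simp add: e_def)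
  obtain d1 where d1: "d1 > 0" "\<forall>a a'. \<bar>a - a'\<bar> < d1 \<longrightarrow> \<bar>\<psi> a - \<psi> a'\<bar> < e" using u e by blast
  obtain d2 where d2: "d2 > 0" "\<forall>a a'. \<bar>a - a'\<bar> < d2 \<longrightarrow> \<bar>\<psi>' a - \<psi>' a'\<bar> < e" using u' e by blast
  have eq: "e / (1 - \<gamma>) = \<eta>" using g by (simp add: e_def)
  show "\<exists>d>0. \<forall>x y i. \<bar>x - y\<bar> < d \<longrightarrow>
     \<bar>S b \<gamma> \<psi> x i - S b \<gamma> \<psi> y i\<bar> \<le> \<eta> \<and> \<bar>Sd b \<gamma> \<psi>' x i - Sd b \<gamma> \<psi>' y i\<bar> \<le> \<eta>"
  proof (intro exI conjI allI impI)
    show "min d1 d2 > 0" using d1 d2 by simp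
    fix x y i assume xy: "\<bar>x - y\<bar> < min d1 d2"
    define a where "a m = (x + real (NN b i m)) / real b ^ (m + 1)" for m
    define a' where "a' m = (y + real (NN b i m)) / real b ^ (m + 1)" for m
    have close1: "\<bar>a m - a' m\<bar> < d1" for m unfolding a_def a'_def by (rule arg_close) (use b xy in auto)
    have close2: "\<bar>a m - a' m\<bar> < d2" for m unfolding a_def a'_def by (rule arg_close) (use b xy in auto)
    have "S b \<gamma> \<psi> x i - S b \<gamma> \<psi> y i = (\<Sum>m. \<gamma> ^ m * \<psi> (a m) - \<gamma> ^ m * \<psi> (a' m))"
      unfolding S_NN a_def a'_def by (rule suminf_diff; rule S_summable[OF B g])
    also have "\<bar>\<dots>\<bar> \<le> e / (1 - \<gamma>)"
    proof (rule geo_suminf_bound[OF _ g])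
      fix m
      have "\<bar>\<psi> (a m) - \<psi> (a' m)\<bar> \<le> e" using d1 close1[of m] by (simp add: less_imp_le)
      then have "\<gamma> ^ m * \<bar>\<psi> (a m) - \<psi> (a' m)\<bar> \<le> \<gamma> ^ m * e" using g by (intro mult_left_mono) auto
      then show "\<bar>\<gamma> ^ m * \<psi> (a m) - \<gamma> ^ m * \<psi> (a' m)\<bar> \<le> e * \<gamma> ^ m"
        using g by (simp add: abs_mult mult.commute right_diff_distrib[symmetric])
    qed
    finally show "\<bar>S b \<gamma> \<psi> x i - S b \<gamma> \<psi> y i\<bar> \<le> \<eta>" using eq by simp
    have "Sd b \<gamma> \<psi>' x i - Sd b \<gamma> \<psi>' y i = (\<Sum>m. \<gamma> ^ m * (\<psi>' (a m) * (1 / real b ^ (m + 1))) - \<gamma> ^ m * (\<psi>' (a' m) * (1 / real b ^ (m + 1))))"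
      unfolding Sd_def a_def a'_def by (rule suminf_diff; rule Sd_summable[OF B' g b])
    also have "\<bar>\<dots>\<bar> \<le> e / (1 - \<gamma>)"
    proof (rule geo_suminf_bound[OF _ g])
      fix m
      have bp: "real b ^ (m + 1) \<ge> 1" by (rule one_le_power) (use b in simp)
      have "\<bar>\<psi>' (a m) - \<psi>' (a' m)\<bar> \<le> e" using d2 close2[of m] by (simp add: less_imp_le)
      then have "\<bar>\<psi>' (a m) - \<psi>' (a' m)\<bar> * (1 / real b ^ (m + 1)) \<le> e * 1"
        using bp e by (intro mult_mono) (auto simp: divide_simps)
      then have "\<gamma> ^ m * (\<bar>\<psi>' (a m) - \<psi>' (a' m)\<bar> * (1 / real b ^ (m + 1))) \<le> \<gamma> ^ m * e"
        using g by (intro mult_left_mono) auto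
      moreover have "\<bar>\<gamma> ^ m * (\<psi>' (a m) * (1 / real b ^ (m + 1))) - \<gamma> ^ m * (\<psi>' (a' m) * (1 / real b ^ (m + 1)))\<bar>
         = \<gamma> ^ m * (\<bar>\<psi>' (a m) - \<psi>' (a' m)\<bar> * (1 / real b ^ (m + 1)))"
      proof -
        have "\<gamma> ^ m * (\<psi>' (a m) * (1 / real b ^ (m + 1))) - \<gamma> ^ m * (\<psi>' (a' m) * (1 / real b ^ (m + 1)))
           = \<gamma> ^ m * ((\<psi>' (a m) - \<psi>' (a' m)) * (1 / real b ^ (m + 1)))" by (simp add: algebra_simps diff_divide_distrib)
        then show ?thesis using g bp by (simp only: abs_mult) simp
      qed
      ultimately show "\<bar>\<gamma> ^ m * (\<psi>' (a m) * (1 / real b ^ (m + 1))) - \<gamma> ^ m * (\<psi>' (a' m) * (1 / real b ^ (m + 1)))\<bar> \<le> e * \<gamma> ^ m"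
        by (simp add: mult.commute)
    qed
    finally show "\<bar>Sd b \<gamma> \<psi>' x i - Sd b \<gamma> \<psi>' y i\<bar> \<le> \<eta>" using eq by simp
  qed
qed

lemma NN_Suc: "NN b i (Suc m) = NN b i m + i (Suc m) * b ^ Suc m"
  by (simp add: NN_def)

lemma NN_0: "NN b i 0 = i 0"
  by (simp add: NN_def)

lemma NN_bound: assumes "i \<in> seqs b" shows "NN b i m < b ^ (m + 1)"
proof (induction m)
  case 0 then show ?case using assms by (simp add: NN_0 seqs_def)
next
  case (Suc m)
  define P where "P = b ^ Suc m"
  have "i (Suc m) < b" using assms by (auto simp: seqs_def)
  then have "i (Suc m) \<le> b - 1" by arith
  then have h1: "i (Suc m) * P \<le> (b - 1) * P" by (rule mult_right_mono) simp
  have "P \<le> b * P" using Suc by (cases b) auto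
  moreover have "(b - 1) * P = b * P - P" by (simp add: diff_mult_distrib)
  ultimately have h2: "P + (b - 1) * P = b * P" by arith
  have h3: "NN b i m < P" using Suc by (simp add: P_def)
  have h4: "NN b i (Suc m) = NN b i m + i (Suc m) * P" by (simp add: NN_Suc P_def)
  have h5: "b ^ (Suc m + 1) = b * P" by (simp add: P_def)
  show ?case unfolding h4 h5 using h1 h2 h3 by linarith
qed

lemma NN_digits:
  assumes b: "b > 0" and A: "\<And>m. A (Suc m) mod b ^ Suc m = A m mod b ^ Suc m"
  shows "NN b (\<lambda>n. A n div b ^ n mod b) m = A m mod b ^ (m + 1)"
proof (induction m)
  case 0 then show ?case by (simp add: NN_0)
next
  case (Suc m)
  have "NN b (\<lambda>n. A n div b ^ n mod b) (Suc m) = A (Suc m) mod b ^ Suc m + (A (Suc m) div b ^ Suc m mod b) * b ^ Suc m"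
    using Suc A[of m] by (simp add: NN_Suc)
  also have "\<dots> = A (Suc m) mod (b ^ Suc m * b)" by (simp add: mod_mult2_eq)
  finally show ?case by (simp add: mult.commute)
qed

lemma NN_inj:
  assumes b: "b > 0" and h: "\<And>m. NN b j m = NN b j' m" shows "j = j'"
proof
  fix n show "j n = j' n"
  proof (cases n)
    case 0 then show ?thesis using h[of 0] by (simp add: NN_0)
  next
    case (Suc m)
    have "j (Suc m) * b ^ Suc m = j' (Suc m) * b ^ Suc m" using h[of m] h[of "Suc m"] by (simp add: NN_Suc)
    then show ?thesis using b Suc by simp
  qed
qed

definition odo :: "nat \<Rightarrow> (nat \<Rightarrow> nat) \<Rightarrow> (nat \<Rightarrow> nat)" where
  "odo b i = (\<lambda>n. (1 + NN b i n) div b ^ n mod b)"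

definition pre :: "nat \<Rightarrow> (nat \<Rightarrow> nat) \<Rightarrow> (nat \<Rightarrow> nat)" where
  "pre b i = (\<lambda>n. (NN b i n + (b ^ (n + 1) - 1)) div b ^ n mod b)"

lemma NN_odo: assumes b: "b > 0" shows "NN b (odo b i) m = (1 + NN b i m) mod b ^ (m + 1)"
  unfolding odo_def
proof (rule NN_digits[OF b])
  fix m
  show "(1 + NN b i (Suc m)) mod b ^ Suc m = (1 + NN b i m) mod b ^ Suc m"
    by (simp add: NN_Suc add.assoc[symmetric])
qed

lemma NN_pre: assumes b: "b > 0" shows "NN b (pre b i) m = (NN b i m + (b ^ (m + 1) - 1)) mod b ^ (m + 1)"
  unfolding pre_def
proof (rule NN_digits[OF b])
  fix m
  define B where "B = b ^ Suc m"
  have B1: "B \<ge> 1" using b by (simp add: B_def)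
  have "B \<le> b * B" using b by simp
  moreover have "(b - 1) * B = b * B - B" by (simp add: diff_mult_distrib)
  ultimately have "b * B - 1 = (B - 1) + (b - 1) * B" using B1 by arith
  then have e: "b ^ (Suc m + 1) - 1 = (B - 1) + (b - 1) * B" by (simp add: B_def)
  have "NN b i (Suc m) + (b ^ (Suc m + 1) - 1) = (NN b i m + (B - 1)) + (i (Suc m) + (b - 1)) * B"
    unfolding e NN_Suc B_def[symmetric] by (simp add: add_mult_distrib)
  then show "(NN b i (Suc m) + (b ^ (Suc m + 1) - 1)) mod b ^ Suc m = (NN b i m + (b ^ (m + 1) - 1)) mod b ^ Suc m"
    by (simp add: B_def)
qed

lemma odo_seqs: "b > 0 \<Longrightarrow> odo b i \<in> seqs b"
  by (simp add: odo_def seqs_def)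

lemma pre_seqs: "b > 0 \<Longrightarrow> pre b i \<in> seqs b"
  by (simp add: pre_def seqs_def)

lemma odo_pre: assumes b: "b > 0" and i: "i \<in> seqs b" shows "odo b (pre b i) = i"
proof (rule NN_inj[OF b])
  fix m
  have P: "b ^ (m + 1) \<ge> 1" using b by simp
  have "NN b (odo b (pre b i)) m = (1 + (NN b i m + (b ^ (m + 1) - 1)) mod b ^ (m + 1)) mod b ^ (m + 1)"
    using b by (simp add: NN_odo NN_pre)
  also have "\<dots> = (1 + (NN b i m + (b ^ (m + 1) - 1))) mod b ^ (m + 1)" by (rule mod_add_right_eq)
  also have "1 + (NN b i m + (b ^ (m + 1) - 1)) = NN b i m + b ^ (m + 1)" using P by simp
  also have "(NN b i m + b ^ (m + 1)) mod b ^ (m + 1) = NN b i m" using NN_bound[OF i, of m] by simp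
  finally show "NN b (odo b (pre b i)) m = NN b i m" .
qed

lemma NN_local: "(\<And>k. k \<le> n \<Longrightarrow> i k = j k) \<Longrightarrow> NN b i n = NN b j n"
  unfolding NN_def by (rule sum.cong) auto

lemma odo_local: "(\<And>k. k \<le> n \<Longrightarrow> i k = j k) \<Longrightarrow> odo b i n = odo b j n"
  unfolding odo_def using NN_local[of n i j b] by simp

lemma arg_shift:
  assumes b: "b > 0"
  shows "(1 + real (NN b i m)) / real b ^ (m + 1)
     = (0 + real (NN b (odo b i) m)) / real b ^ (m + 1) + real_of_int (int ((1 + NN b i m) div b ^ (m + 1)))"
proof -
  define P where "P = b ^ (m + 1)"
  have P: "P > 0" using b by (simp add: P_def)
  have "1 + NN b i m = (1 + NN b i m) div P * P + (1 + NN b i m) mod P"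
    by (simp only: div_mult_mod_eq)
  then have "1 + NN b i m = (1 + NN b i m) div P * P + NN b (odo b i) m"
    using NN_odo[OF b, of i m] by (simp only: P_def)
  then have "1 + real (NN b i m) = real ((1 + NN b i m) div P) * real P + real (NN b (odo b i) m)"
    by (metis of_nat_1 of_nat_add of_nat_mult)
  then have "(1 + real (NN b i m)) / real P = real (NN b (odo b i) m) / real P + real ((1 + NN b i m) div P)"
    using P by (simp add: field_simps)
  then show ?thesis by (simp add: P_def)
qed

lemma per_odo:
  fixes f :: "real \<Rightarrow> real"
  assumes per: "\<forall>x. f (x + 1) = f x" and b: "b > 0"
  shows "f ((1 + real (NN b i m)) / real b ^ (m + 1)) = f ((0 + real (NN b (odo b i) m)) / real b ^ (m + 1))"
  unfolding arg_shift[OF b] by (rule per_int[OF per])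

lemma S_odo:
  fixes \<psi> :: "real \<Rightarrow> real"
  assumes per: "\<forall>x. \<psi> (x + 1) = \<psi> x" and b: "b > 0"
  shows "S b \<gamma> \<psi> 1 i = S b \<gamma> \<psi> 0 (odo b i)"
  unfolding S_NN using per_odo[OF per b, of i] by presburger

lemma Sd_odo:
  fixes \<psi>' :: "real \<Rightarrow> real"
  assumes per: "\<forall>x. \<psi>' (x + 1) = \<psi>' x" and b: "b > 0"
  shows "Sd b \<gamma> \<psi>' 1 i = Sd b \<gamma> \<psi>' 0 (odo b i)"
  unfolding Sd_def using per_odo[OF per b, of i] by presburger

lemma odo_surj:
  assumes b: "b > 0" and k': "k' \<in> words b q"
  shows "\<exists>k\<in>words b q. \<forall>u\<in>seqs b. \<exists>u'\<in>seqs b. odo b (cat k u) = cat k' u'"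
proof -
  define i' where "i' = cat k' (\<lambda>_. 0)"
  have i's: "i' \<in> seqs b" using k' b by (auto simp: i'_def cat_def seqs_def words_def)
  define i where "i = pre b i'"
  have oi: "odo b i = i'" unfolding i_def by (rule odo_pre[OF b i's])
  define k where "k = map i [0..<q]"
  have lk: "length k = q" by (simp add: k_def)
  have lk': "length k' = q" using k' by (simp add: words_def)
  have "k \<in> words b q" using pre_seqs[OF b, of i'] by (auto simp: k_def words_def seqs_def i_def)
  moreover have "\<forall>u\<in>seqs b. \<exists>u'\<in>seqs b. odo b (cat k u) = cat k' u'"
  proof
    fix u assume u: "u \<in> seqs b"
    define j where "j = cat k u"
    have ji: "j n = i n" if "n < q" for n using that by (simp add: j_def cat_def k_def)
    have oj: "odo b j n = k' ! n" if "n < q" for n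
    proof -
      have "odo b j n = odo b i n" by (rule odo_local) (use that ji in auto)
      also have "\<dots> = i' n" using oi by simp
      finally show ?thesis using that lk' by (simp add: i'_def cat_def)
    qed
    show "\<exists>u'\<in>seqs b. odo b (cat k u) = cat k' u'"
    proof (intro bexI)
      show "odo b (cat k u) = cat k' (\<lambda>n. odo b j (n + q))"
        unfolding j_def[symmetric] by (rule ext) (auto simp: cat_def lk' oj)
      show "(\<lambda>n. odo b j (n + q)) \<in> seqs b" using odo_seqs[OF b, of j] by (auto simp: seqs_def)
    qed
  qed
  ultimately show ?thesis by blast
qed

lemma E_full:
  assumes "\<forall>k\<in>words b q. \<forall>l\<in>words b q. \<forall>\<epsilon>>0. \<forall>\<delta>>0. \<exists>u\<in>seqs b. \<exists>v\<in>seqs b.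
             tangent b \<gamma> \<psi> \<epsilon> \<delta> x (cat k u) (cat l v)"
  shows "E b \<gamma> \<psi> q x = words b q \<times> words b q"
proof (intro equalityI subsetI)
  fix p assume "p \<in> E b \<gamma> \<psi> q x"
  then have "p \<in> Eed b \<gamma> \<psi> q x 1 1" unfolding E_def by auto
  then show "p \<in> words b q \<times> words b q" by (auto simp: Eed_def)
next
  fix p assume "p \<in> words b q \<times> words b q"
  then show "p \<in> E b \<gamma> \<psi> q x" using assms by (auto simp: E_def Eed_def)
qed

lemma tri: fixes a a' c c' :: real
  assumes "\<bar>a' - a\<bar> \<le> \<eta>" "\<bar>c' - c\<bar> \<le> \<eta>" "\<bar>a' - c'\<bar> \<le> t" "t \<le> \<eta>" "3 * \<eta> \<le> \<epsilon>"
  shows "\<bar>a - c\<bar> \<le> \<epsilon>"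
  using assms by (auto simp: abs_le_iff)

lemma uniform_exclusion:
  fixes \<psi> \<psi>' :: "real \<Rightarrow> real"
  assumes b: "b \<ge> 2" and g: "0 \<le> \<gamma>" "\<gamma> < 1"
    and per: "\<forall>x. \<psi> (x + 1) = \<psi> x" and per': "\<forall>x. \<psi>' (x + 1) = \<psi>' x"
    and d: "\<forall>x. (\<psi> has_real_derivative \<psi>' x) (at x)"
    and B: "\<forall>x. \<bar>\<psi> x\<bar> \<le> B" and B': "\<forall>x. \<bar>\<psi>' x\<bar> \<le> B'"
    and u: "\<forall>\<eta>>0. \<exists>d>0. \<forall>a a'. \<bar>a - a'\<bar> < d \<longrightarrow> \<bar>\<psi> a - \<psi> a'\<bar> < \<eta>"
    and u': "\<forall>\<eta>>0. \<exists>d>0. \<forall>a a'. \<bar>a - a'\<bar> < d \<longrightarrow> \<bar>\<psi>' a - \<psi>' a'\<bar> < \<eta>"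
    and E: "\<forall>x\<in>{0..<1}. E b \<gamma> \<psi> q x \<noteq> words b q \<times> words b q"
  shows "\<exists>\<epsilon>>0. \<exists>\<delta>>0. \<forall>x\<in>{0..<1}. \<exists>k\<in>words b q. \<exists>l\<in>words b q. (k, l) \<notin> Eed b \<gamma> \<psi> q x \<epsilon> \<delta>"
proof (rule ccontr)
  have b1: "b \<ge> 1" "b > 0" using b by auto
  have S'eq: "S' b \<gamma> \<psi> x i = Sd b \<gamma> \<psi>' x i" for x i by (rule S'_Sd[OF d B B' g b1(1)])
  note UC = S_ucont[OF B B' u u' g b1(1)]
  assume "\<not> ?thesis"
  then have "\<forall>n::nat. \<exists>x\<in>{0..<1}. \<forall>k\<in>words b q. \<forall>l\<in>words b q. (k, l) \<in> Eed b \<gamma> \<psi> q x (1 / Suc n) (1 / Suc n)"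
    by (metis of_nat_0_less_iff zero_less_Suc zero_less_divide_1_iff)
  then obtain X where X: "\<And>n. X n \<in> {0..<1}"
    "\<And>n k l. k \<in> words b q \<Longrightarrow> l \<in> words b q \<Longrightarrow> (k, l) \<in> Eed b \<gamma> \<psi> q (X n) (1 / Suc n) (1 / Suc n)"
    by metis
  have "seq_compact {0..1::real}" by (rule compact_imp_seq_compact) simp
  then obtain xs r where xs: "xs \<in> {0..1}" and r: "strict_mono r" "(X \<circ> r) \<longlonglongrightarrow> xs"
    unfolding seq_compact_def using X(1) by (metis atLeastLessThan_iff atLeastAtMost_iff less_imp_le)
  have ALL: "\<forall>k\<in>words b q. \<forall>l\<in>words b q. \<forall>\<epsilon>>0. \<forall>\<delta>>0. \<exists>u\<in>seqs b. \<exists>v\<in>seqs b.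
             tangent b \<gamma> \<psi> \<epsilon> \<delta> xs (cat k u) (cat l v)"
  proof (intro ballI allI impI)
    fix k l and \<epsilon> \<delta> :: real assume kl: "k \<in> words b q" "l \<in> words b q" and e: "\<epsilon> > 0" "\<delta> > 0"
    define \<eta> where "\<eta> = min \<epsilon> \<delta> / 3"
    have \<eta>: "\<eta> > 0" using e by (simp add: \<eta>_def)
    obtain dd where dd: "dd > 0" "\<And>x y i. \<bar>x - y\<bar> < dd \<Longrightarrow>
       \<bar>S b \<gamma> \<psi> x i - S b \<gamma> \<psi> y i\<bar> \<le> \<eta> \<and> \<bar>Sd b \<gamma> \<psi>' x i - Sd b \<gamma> \<psi>' y i\<bar> \<le> \<eta>"
      using UC \<eta> by metis
    obtain N1 where N1: "\<And>n. n \<ge> N1 \<Longrightarrow> \<bar>X (r n) - xs\<bar> < dd"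
      using r(2) dd(1) unfolding LIMSEQ_def dist_real_def by (metis comp_apply)
    obtain N2 where N2: "1 / real (Suc N2) < \<eta>" using reals_Archimedean[OF \<eta>] by (metis inverse_eq_divide)
    define n where "n = max N1 N2"
    have rn: "r n \<ge> N2" using seq_suble[OF r(1), of n] by (simp add: n_def)
    have small: "1 / real (Suc (r n)) \<le> \<eta>"
    proof -
      have "1 / real (Suc (r n)) \<le> 1 / real (Suc N2)" using rn by (intro divide_left_mono) auto
      then show ?thesis using N2 by linarith
    qed
    have close: "\<bar>X (r n) - xs\<bar> < dd" using N1 by (simp add: n_def)
    obtain uu vv where uv: "uu \<in> seqs b" "vv \<in> seqs b"
      "tangent b \<gamma> \<psi> (1 / Suc (r n)) (1 / Suc (r n)) (X (r n)) (cat k uu) (cat l vv)"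
      using X(2)[OF kl, of "r n"] unfolding Eed_def by auto
    have c1: "\<bar>S b \<gamma> \<psi> (X (r n)) i - S b \<gamma> \<psi> xs i\<bar> \<le> \<eta>" "\<bar>Sd b \<gamma> \<psi>' (X (r n)) i - Sd b \<gamma> \<psi>' xs i\<bar> \<le> \<eta>" for i
      using dd(2)[OF close] by auto
    show "\<exists>u\<in>seqs b. \<exists>v\<in>seqs b. tangent b \<gamma> \<psi> \<epsilon> \<delta> xs (cat k u) (cat l v)"
    proof (intro bexI)
      show "tangent b \<gamma> \<psi> \<epsilon> \<delta> xs (cat k uu) (cat l vv)"
      proof -
        have t: "\<bar>S b \<gamma> \<psi> (X (r n)) (cat k uu) - S b \<gamma> \<psi> (X (r n)) (cat l vv)\<bar> \<le> 1 / real (Suc (r n))"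
          "\<bar>Sd b \<gamma> \<psi>' (X (r n)) (cat k uu) - Sd b \<gamma> \<psi>' (X (r n)) (cat l vv)\<bar> \<le> 1 / real (Suc (r n))"
          using uv(3) unfolding tangent_def S'eq by auto
        have "3 * \<eta> \<le> \<epsilon>" "3 * \<eta> \<le> \<delta>" by (auto simp: \<eta>_def)
        then show ?thesis unfolding tangent_def S'eq
          using tri[OF c1(1)[of "cat k uu"] c1(1)[of "cat l vv"] t(1) small]
                tri[OF c1(2)[of "cat k uu"] c1(2)[of "cat l vv"] t(2) small] by auto
      qed
    qed (use uv in auto)
  qed
  show False
  proof (cases "xs < 1")
    case True
    then show False using E xs E_full[OF ALL] by auto
  next
    case False
    then have x1: "xs = 1" using xs by auto
    have "\<forall>k\<in>words b q. \<forall>l\<in>words b q. \<forall>\<epsilon>>0. \<forall>\<delta>>0. \<exists>u\<in>seqs b. \<exists>v\<in>seqs b.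
             tangent b \<gamma> \<psi> \<epsilon> \<delta> 0 (cat k u) (cat l v)"
    proof (intro ballI allI impI)
      fix k' l' and \<epsilon> \<delta> :: real assume kl: "k' \<in> words b q" "l' \<in> words b q" and e: "\<epsilon> > 0" "\<delta> > 0"
      obtain k where k: "k \<in> words b q" "\<forall>u\<in>seqs b. \<exists>u'\<in>seqs b. odo b (cat k u) = cat k' u'"
        using odo_surj[OF b1(2) kl(1)] by blast
      obtain l where l: "l \<in> words b q" "\<forall>u\<in>seqs b. \<exists>u'\<in>seqs b. odo b (cat l u) = cat l' u'"
        using odo_surj[OF b1(2) kl(2)] by blast
      obtain uu vv where uv: "uu \<in> seqs b" "vv \<in> seqs b" "tangent b \<gamma> \<psi> \<epsilon> \<delta> 1 (cat k uu) (cat l vv)"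
        using ALL k(1) l(1) e x1 by blast
      obtain u' where u': "u' \<in> seqs b" "odo b (cat k uu) = cat k' u'" using k(2) uv(1) by blast
      obtain v' where v': "v' \<in> seqs b" "odo b (cat l vv) = cat l' v'" using l(2) uv(2) by blast
      have "tangent b \<gamma> \<psi> \<epsilon> \<delta> 0 (odo b (cat k uu)) (odo b (cat l vv))"
        using uv(3) unfolding tangent_def S'eq S_odo[OF per b1(2)] Sd_odo[OF per' b1(2)] .
      then show "\<exists>u\<in>seqs b. \<exists>v\<in>seqs b. tangent b \<gamma> \<psi> \<epsilon> \<delta> 0 (cat k' u) (cat l' v)"
        using u' v' by auto
    qed
    then show False using E E_full by fastforce
  qed
qed

lemma words_eq: "words b q = {xs. set xs \<subseteq> {..<b} \<and> length xs = q}"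
  by (auto simp: words_def)

lemma words_finite: "finite (words b q)"
  unfolding words_eq by (rule finite_lists_length_eq) simp

lemma words_card: "card (words b q) = b ^ q"
  unfolding words_eq by (subst card_lists_length_eq) simp_all

lemma Eed_sym: "(k, l) \<in> Eed b \<gamma> \<psi> q x e d \<longleftrightarrow> (l, k) \<in> Eed b \<gamma> \<psi> q x e d"
  by (auto simp: Eed_def tangent_def abs_minus_commute)

lemma Eed_diag: assumes "k \<in> words b q" "b > 0" "e \<ge> 0" "d \<ge> 0" shows "(k, k) \<in> Eed b \<gamma> \<psi> q x e d"
proof -
  have "(\<lambda>_. 0) \<in> seqs b" using assms by (simp add: seqs_def)
  then show ?thesis using assms unfolding Eed_def tangent_def by (auto intro!: bexI[of _ "\<lambda>_. 0"])
qed

lemma tri2: fixes a a' c c' :: real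
  assumes "\<bar>a' - a\<bar> \<le> \<eta>" "\<bar>c' - c\<bar> \<le> \<eta>" "\<bar>a' - c'\<bar> \<le> t" "2 * \<eta> + t \<le> \<epsilon>"
  shows "\<bar>a - c\<bar> \<le> \<epsilon>"
  using assms by (auto simp: abs_le_iff)

lemma excl_open:
  assumes UC: "\<And>x y i. \<bar>x - y\<bar> < dd \<Longrightarrow>
       \<bar>S b \<gamma> \<psi> x i - S b \<gamma> \<psi> y i\<bar> \<le> \<eta> \<and> \<bar>S' b \<gamma> \<psi> x i - S' b \<gamma> \<psi> y i\<bar> \<le> \<eta>"
    and e: "4 * \<eta> \<le> \<epsilon>" "4 * \<eta> \<le> \<delta>"
    and ex: "(k, l) \<notin> Eed b \<gamma> \<psi> q x0 \<epsilon> \<delta>" and xx: "\<bar>x - x0\<bar> < dd"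
  shows "(k, l) \<notin> Eed b \<gamma> \<psi> q x (\<epsilon> / 2) (\<delta> / 2)"
proof
  assume "(k, l) \<in> Eed b \<gamma> \<psi> q x (\<epsilon> / 2) (\<delta> / 2)"
  then obtain u v where kl: "k \<in> words b q" "l \<in> words b q" and uv: "u \<in> seqs b" "v \<in> seqs b"
    "tangent b \<gamma> \<psi> (\<epsilon> / 2) (\<delta> / 2) x (cat k u) (cat l v)" unfolding Eed_def by auto
  have c: "\<bar>S b \<gamma> \<psi> x i - S b \<gamma> \<psi> x0 i\<bar> \<le> \<eta>" "\<bar>S' b \<gamma> \<psi> x i - S' b \<gamma> \<psi> x0 i\<bar> \<le> \<eta>" for i
    using UC[OF xx] by auto
  have t: "\<bar>S b \<gamma> \<psi> x (cat k u) - S b \<gamma> \<psi> x (cat l v)\<bar> \<le> \<epsilon> / 2"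
    "\<bar>S' b \<gamma> \<psi> x (cat k u) - S' b \<gamma> \<psi> x (cat l v)\<bar> \<le> \<delta> / 2" using uv(3) unfolding tangent_def by auto
  have "tangent b \<gamma> \<psi> \<epsilon> \<delta> x0 (cat k u) (cat l v)" unfolding tangent_def
    using tri2[OF c(1) c(1) t(1)] tri2[OF c(2) c(2) t(2)] e by auto
  then have "(k, l) \<in> Eed b \<gamma> \<psi> q x0 \<epsilon> \<delta>" using kl uv unfolding Eed_def by auto
  then show False using ex by simp
qed

definition Vf :: "real \<Rightarrow> nat list \<Rightarrow> nat list \<Rightarrow> nat list \<Rightarrow> nat list \<Rightarrow> real" where
  "Vf \<alpha> k l u v = (if u = v then 1 else if (u = k \<and> v = l) \<or> (u = l \<and> v = k) then 0
      else if v = k \<or> v = l then 1 / \<alpha> else if u = k \<or> u = l then \<alpha> else 1)"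

lemma Vf_nonneg: "\<alpha> > 0 \<Longrightarrow> Vf \<alpha> k l u v \<ge> 0"
  by (simp add: Vf_def)

lemma Vf_prod: assumes "\<alpha> > 0" "\<not> ((u = k \<and> v = l) \<or> (u = l \<and> v = k))"
  shows "Vf \<alpha> k l u v * Vf \<alpha> k l v u \<ge> 1"
  using assms by (auto simp: Vf_def)

lemma Vf_rowsum:
  fixes W :: "nat list set"
  assumes fin: "finite W" and kl: "k \<in> W" "l \<in> W" "k \<noteq> l" and u: "u \<in> W" and a: "\<alpha> > 0"
    and eq: "2 - \<alpha> = (real (card W) - 2) * \<alpha> * (\<alpha> - 1)"
  shows "(\<Sum>v\<in>W. Vf \<alpha> k l u v) = real (card W) - 2 + 2 / \<alpha>"
proof -
  define R where "R = W - {k} - {l}"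
  have cR: "real (card R) = real (card W) - 2"
  proof -
    have "card W \<ge> 2"
    proof -
      have "{k, l} \<subseteq> W" using kl by auto
      then have "card {k, l} \<le> card W" by (rule card_mono[OF fin])
      then show ?thesis using kl by simp
    qed
    moreover have "card R = card W - 2" unfolding R_def using kl fin by (simp add: card_Diff_singleton)
    ultimately show ?thesis by simp
  qed
  have split: "(\<Sum>v\<in>W. f v) = f k + f l + (\<Sum>v\<in>R. f v)" for f :: "nat list \<Rightarrow> real"
  proof -
    have "(\<Sum>v\<in>W. f v) = f k + (\<Sum>v\<in>W - {k}. f v)" using fin kl by (simp add: sum.remove)
    also have "(\<Sum>v\<in>W - {k}. f v) = f l + (\<Sum>v\<in>W - {k} - {l}. f v)" using fin kl by (simp add: sum.remove)
    finally show ?thesis unfolding R_def by simp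
  qed
  have R: "v \<in> R \<Longrightarrow> v \<noteq> k \<and> v \<noteq> l" for v by (auto simp: R_def)
  have key: "1 + (real (card W) - 2) * \<alpha> = real (card W) - 2 + 2 / \<alpha>"
  proof -
    have "(1 + (real (card W) - 2) * \<alpha>) * \<alpha> = (real (card W) - 2 + 2 / \<alpha>) * \<alpha>"
      using eq a by (simp add: algebra_simps)
    then show ?thesis using a by simp
  qed
  show ?thesis
  proof (cases "u = k \<or> u = l")
    case True
    have rest: "(\<Sum>v\<in>R. Vf \<alpha> k l u v) = (\<Sum>v\<in>R. \<alpha>)"
      by (rule sum.cong) (use R True in \<open>auto simp: Vf_def\<close>)
    have "Vf \<alpha> k l u k + Vf \<alpha> k l u l = 1" using True kl(3) by (auto simp: Vf_def)
    then have "(\<Sum>v\<in>W. Vf \<alpha> k l u v) = 1 + real (card R) * \<alpha>" unfolding split rest by simp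
    then show ?thesis using cR key by simp
  next
    case False
    have rest: "(\<Sum>v\<in>R. Vf \<alpha> k l u v) = (\<Sum>v\<in>R. 1)"
      by (rule sum.cong) (use R False in \<open>auto simp: Vf_def\<close>)
    have "Vf \<alpha> k l u k + Vf \<alpha> k l u l = 2 / \<alpha>" using False kl(3) by (auto simp: Vf_def)
    then have "(\<Sum>v\<in>W. Vf \<alpha> k l u v) = 2 / \<alpha> + real (card R)" unfolding split rest by simp
    then show ?thesis using cR by simp
  qed
qed

theorem lemma2p6:
  fixes b q :: nat and \<gamma> \<alpha> :: real and \<psi> :: "real \<Rightarrow> real"
  assumes b: "b \<ge> 2"
    and gam: "1 / real b < \<gamma>" "\<gamma> < 1"
    and per: "\<forall>x. \<psi> (x + 1) = \<psi> x"
    and C1: "\<exists>\<psi>'. (\<forall>x. (\<psi> has_real_derivative \<psi>' x) (at x)) \<and> continuous_on UNIV \<psi>'"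
    and q: "q \<ge> 1" "b ^ q \<ge> 2"
    and E: "\<forall>x\<in>{0..<1}. E b \<gamma> \<psi> q x \<noteq> words b q \<times> words b q"
    and alpha: "\<alpha> > 1" "2 - \<alpha> = (real b ^ q - 2) * \<alpha> * (\<alpha> - 1)"
  shows "sigma b \<gamma> \<psi> q \<le> ereal (real b ^ q - 2 + 2 / \<alpha>)"
proof -
  obtain \<psi>' where d: "\<forall>x. (\<psi> has_real_derivative \<psi>' x) (at x)" and c': "continuous_on UNIV \<psi>'"
    using C1 by blast
  have b0: "b > 0" and b1: "b \<ge> 1" using b by auto
  have g0: "0 \<le> \<gamma>" using gam(1) b0 by (smt (verit) divide_pos_pos of_nat_0_less_iff)
  have per': "\<forall>x. \<psi>' (x + 1) = \<psi>' x"
  proof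
    fix x
    have "((\<lambda>y. \<psi> (y + 1)) has_real_derivative \<psi>' (x + 1)) (at x)"
      using d DERIV_shift by blast
    moreover have "(\<lambda>y. \<psi> (y + 1)) = \<psi>" using per by auto
    ultimately have "(\<psi> has_real_derivative \<psi>' (x + 1)) (at x)" by simp
    then show "\<psi>' (x + 1) = \<psi>' x" using d DERIV_unique by blast
  qed
  have c: "continuous_on UNIV \<psi>"
    by (rule continuous_at_imp_continuous_on) (use d DERIV_isCont in blast)
  obtain B where B: "\<forall>x. \<bar>\<psi> x\<bar> \<le> B" using per_bounded[OF per c] by blast
  obtain B' where B': "\<forall>x. \<bar>\<psi>' x\<bar> \<le> B'" using per_bounded[OF per' c'] by blast
  note u = per_unif[OF per c] and u' = per_unif[OF per' c']
  obtain \<epsilon> \<delta> where e: "\<epsilon> > 0" "\<delta> > 0"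
    and excl: "\<forall>x\<in>{0..<1}. \<exists>k\<in>words b q. \<exists>l\<in>words b q. (k, l) \<notin> Eed b \<gamma> \<psi> q x \<epsilon> \<delta>"
    using uniform_exclusion[OF b g0 gam(2) per per' d B B' u u' E] by blast
  have S'eq: "S' b \<gamma> \<psi> x i = Sd b \<gamma> \<psi>' x i" for x i by (rule S'_Sd[OF d B B' g0 gam(2) b1])
  define \<eta> where "\<eta> = min \<epsilon> \<delta> / 4"
  have \<eta>: "\<eta> > 0" "4 * \<eta> \<le> \<epsilon>" "4 * \<eta> \<le> \<delta>" using e by (auto simp: \<eta>_def)
  obtain dd where dd: "dd > 0" "\<And>x y i. \<bar>x - y\<bar> < dd \<Longrightarrow>
       \<bar>S b \<gamma> \<psi> x i - S b \<gamma> \<psi> y i\<bar> \<le> \<eta> \<and> \<bar>S' b \<gamma> \<psi> x i - S' b \<gamma> \<psi> y i\<bar> \<le> \<eta>"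
    using S_ucont[OF B B' u u' g0 gam(2) b1] \<eta>(1) unfolding S'eq[symmetric] by metis
  obtain N0 where N0: "1 / real (Suc N0) < dd" using reals_Archimedean[OF dd(1)] by (metis inverse_eq_divide)
  define N where "N = Suc N0"
  have "\<forall>j. \<exists>k l. j < N \<longrightarrow> k \<in> words b q \<and> l \<in> words b q \<and> (k, l) \<notin> Eed b \<gamma> \<psi> q (real j / real N) \<epsilon> \<delta>"
  proof
    fix j
    show "\<exists>k l. j < N \<longrightarrow> k \<in> words b q \<and> l \<in> words b q \<and> (k, l) \<notin> Eed b \<gamma> \<psi> q (real j / real N) \<epsilon> \<delta>"
    proof (cases "j < N")
      case True
      then have "real j / real N \<in> {0..<1}" by (auto simp: N_def divide_simps)
      then show ?thesis using excl by blast
    qed auto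
  qed
  then obtain kk ll where kl: "\<And>j. j < N \<Longrightarrow> kk j \<in> words b q \<and> ll j \<in> words b q \<and>
      (kk j, ll j) \<notin> Eed b \<gamma> \<psi> q (real j / real N) \<epsilon> \<delta>"
    by metis
  define J where "J x = nat \<lfloor>x * real N\<rfloor>" for x
  have Jx: "J x < N \<and> \<bar>x - real (J x) / real N\<bar> < dd" if x: "x \<in> {0..<1}" for x
  proof -
    have N: "real N > 0" by (simp add: N_def)
    have x0: "0 \<le> x * real N" "x * real N < real N" using x N by auto
    have f0: "0 \<le> \<lfloor>x * real N\<rfloor>" using x0 by simp
    have f1: "real_of_int \<lfloor>x * real N\<rfloor> \<le> x * real N" "x * real N < real_of_int \<lfloor>x * real N\<rfloor> + 1"
      by linarith+
    have rJ: "real (J x) = real_of_int \<lfloor>x * real N\<rfloor>" using f0 by (simp add: J_def)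
    have "real (J x) < real N" using rJ f1 x0 by linarith
    then have JN: "J x < N" by simp
    have "0 \<le> x * real N - real (J x)" "x * real N - real (J x) < 1" using rJ f1 by linarith+
    moreover have eqx: "x - real (J x) / real N = (x * real N - real (J x)) / real N" using N by (simp add: field_simps)
    ultimately have "0 \<le> x - real (J x) / real N" "x - real (J x) / real N < 1 / real N"
      using N by (auto intro: divide_strict_right_mono)
    then have "\<bar>x - real (J x) / real N\<bar> < 1 / real N" by simp
    then show ?thesis using JN N0 by (simp add: N_def)
  qed
  have ex': "kk (J x) \<in> words b q \<and> ll (J x) \<in> words b q \<and> kk (J x) \<noteq> ll (J x) \<and>
      (kk (J x), ll (J x)) \<notin> Eed b \<gamma> \<psi> q x (\<epsilon> / 2) (\<delta> / 2) \<and>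
      (ll (J x), kk (J x)) \<notin> Eed b \<gamma> \<psi> q x (\<epsilon> / 2) (\<delta> / 2)" if x: "x \<in> {0..<1}" for x
  proof -
    have j: "J x < N" "\<bar>x - real (J x) / real N\<bar> < dd" using Jx[OF x] by auto
    have n1: "(kk (J x), ll (J x)) \<notin> Eed b \<gamma> \<psi> q x (\<epsilon> / 2) (\<delta> / 2)"
      by (rule excl_open[OF dd(2) \<eta>(2,3) _ j(2)]) (use kl[OF j(1)] in auto)
    have w: "kk (J x) \<in> words b q" "ll (J x) \<in> words b q" using kl[OF j(1)] by auto
    have "kk (J x) \<noteq> ll (J x)"
    proof
      assume "kk (J x) = ll (J x)"
      moreover have "(kk (J x), kk (J x)) \<in> Eed b \<gamma> \<psi> q (real (J x) / real N) \<epsilon> \<delta>"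
        by (rule Eed_diag) (use w b0 e in auto)
      ultimately show False using kl[OF j(1)] by simp
    qed
    then show ?thesis using n1 w Eed_sym by blast
  qed
  define V where "V x u v = Vf \<alpha> (kk (J x)) (ll (J x)) u v" for x u v
  define T where "T = real b ^ q - 2 + 2 / \<alpha>"
  have a0: "\<alpha> > 0" using alpha by simp
  have cardW: "real (card (words b q)) = real b ^ q" by (simp add: words_card)
  have rows: "(\<Sum>v\<in>words b q. V x u v) = T" if x: "x \<in> {0..<1}" and u: "u \<in> words b q" for x u
    unfolding V_def T_def cardW[symmetric]
    by (rule Vf_rowsum[OF words_finite _ _ _ u a0]) (use ex'[OF x] alpha(2) cardW in auto)
  have meas: "(\<lambda>x. V x u v) \<in> borel_measurable unitI" for u v
  proof -
    have "(\<lambda>x. \<lfloor>x * real N\<rfloor>) \<in> borel \<rightarrow>\<^sub>M count_space UNIV"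
      by (rule measurable_compose[OF _ measurable_real_floor]) simp
    then have "(\<lambda>x. (\<lambda>j. Vf \<alpha> (kk (nat j)) (ll (nat j)) u v) \<lfloor>x * real N\<rfloor>) \<in> borel_measurable borel"
      by (rule measurable_compose) simp
    then have "(\<lambda>x. V x u v) \<in> borel_measurable borel" by (simp add: V_def J_def)
    then show ?thesis by (intro measurable_restrict_space1) simp
  qed
  have adm: "admissible b \<gamma> \<psi> q V"
    unfolding admissible_def
  proof (intro conjI ballI)
    show "(\<lambda>x. V x u v) \<in> borel_measurable unitI" for u v by (rule meas)
    show "0 \<le> V x u v" for x u v using a0 by (simp add: V_def Vf_nonneg)
    show "\<exists>\<epsilon>>0. \<exists>\<delta>>0. \<forall>x\<in>{0..<1}. \<forall>(u, v)\<in>Eed b \<gamma> \<psi> q x \<epsilon> \<delta>. 1 \<le> V x u v * V x v u"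
    proof (intro exI conjI ballI)
      show "\<epsilon> / 2 > 0" "\<delta> / 2 > 0" using e by auto
      fix x p assume x: "x \<in> {0..<1}" and p: "p \<in> Eed b \<gamma> \<psi> q x (\<epsilon> / 2) (\<delta> / 2)"
      obtain u v where p': "p = (u, v)" by fastforce
      have "\<not> ((u = kk (J x) \<and> v = ll (J x)) \<or> (u = ll (J x) \<and> v = kk (J x)))"
        using ex'[OF x] p p' by auto
      then have "1 \<le> V x u v * V x v u" unfolding V_def by (rule Vf_prod[OF a0])
      then show "case p of (u, v) \<Rightarrow> 1 \<le> V x u v * V x v u" using p' by simp
    qed
  qed
  have wt: "weight (\<lambda>_. 1)" unfolding weight_def by auto
  have Wne: "words b q \<noteq> {}"
  proof -
    have "replicate q 0 \<in> words b q" using b0 by (auto simp: words_def)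
    then show ?thesis by blast
  qed
  have sig: "SigmaVw b q V (\<lambda>_. 1) x = ereal T" if x: "x \<in> {0..<1}" for x
  proof -
    have "SigmaVw b q V (\<lambda>_. 1) x = (SUP u\<in>words b q. ereal T)"
      unfolding SigmaVw_def by (rule SUP_cong) (use rows[OF x] in auto)
    also have "\<dots> = ereal T" using Wne by simp
    finally show ?thesis .
  qed
  have "SigmaVw b q V (\<lambda>_. 1) \<in> borel_measurable unitI"
  proof -
    have "(\<lambda>_. ereal T) \<in> borel_measurable unitI" by simp
    then show ?thesis using measurable_cong[of unitI "SigmaVw b q V (\<lambda>_. 1)" "\<lambda>_. ereal T"] sig
      by (simp add: space_restrict_space)
  qed
  then have es: "esssup unitI (SigmaVw b q V (\<lambda>_. 1)) \<le> ereal T"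
    by (rule esssup_I) (rule AE_I2, use sig in \<open>simp add: space_restrict_space\<close>)
  have "sigma b \<gamma> \<psi> q \<le> esssup unitI (SigmaVw b q V (\<lambda>_. 1))"
    unfolding sigma_def by (rule INF_lower2[of "(\<lambda>_. 1, V)"]) (use wt adm in auto)
  then show ?thesis using es unfolding T_def by simp
qed

end
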